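(* For each term $t$ there is at most one type $\tau$ such that $\Gamma\vdash t:\tau$ for some context $\Gamma$. If such a $\tau$ exists, there is a smallest context $\Gamma$ with $\Gamma\vdash t:\tau$, and it coincides with the set of free variables of $t$ (in the usual sense).
   Context: Types: $\rho,\tau::=\Diamond\mid\mathbf{B}\mid\tau\multimap\rho\mid\tau\otimes\rho\mid\tau\times\rho\mid\mathbf{L}(\tau)$. Raw terms: $r,s,t::=x^\tau\mid c\mid\lambda x^\tau.\,t\mid\langle t,s\rangle\mid ts\mid\{t\}$, where each variable $x^\tau$ carries a type (infinitely many variables of each type), application associates to the left, terms are identified up to renaming of bound variables ($\lambda$ is the only binder), and the constants $c$ with their types are $\mathsf{tt},\mathsf{ff}:\mathbf{B}$; $\mathsf{nil}_\tau:\mathbf{L}(\tau)$; $\mathsf{cons}_\tau:\Diamond\multimap\tau\multimap\mathbf{L}(\tau)\multimap\mathbf{L}(\tau)$; $\otimes_{\tau,\rho}:\tau\multimap\rho\multimap\tau\otimes\rho$. A context is a finite set of typed variables; $\Gamma_1,\Gamma_2$ denotes $\Gamma_1\cup\Gamma_2$ and presupposes $\Gamma_1\cap\Gamma_2=\emptyset$; $x^\tau$ also denotes $\{x^\tau\}$. The relation $\Gamma\vdash t:\tau$ is inductively defined by: (Var) $\Gamma,x^\tau\vdash x:\tau$; (Const) $\Gamma\vdash c:\tau$ for a constant $c$ of type $\tau$; ($\multimap^+$) from $\Gamma\cup\{x^\tau\}\vdash t:\rho$ infer $\Gamma\vdash\lambda x^\tau.t:\tau\multimap\rho$; ($\multimap^-$)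 from $\Gamma_1\vdash t:\tau\multimap\rho$ and $\Gamma_2\vdash s:\tau$ infer $\Gamma_1,\Gamma_2\vdash ts:\rho$; ($\times^+$) from $\Gamma\vdash t:\tau$ and $\Gamma\vdash s:\rho$ infer $\Gamma\vdash\langle t,s\rangle:\tau\times\rho$; ($\times^-_1$) from $\Gamma\vdash t:\tau\times\rho$ infer $\Gamma\vdash t\,\mathsf{tt}:\tau$; ($\times^-_0$) from $\Gamma\vdash t:\tau\times\rho$ infer $\Gamma\vdash t\,\mathsf{ff}:\rho$; ($\mathbf{B}^-$) from $\Gamma_1\vdash t:\mathbf{B}$, $\Gamma_2\vdash s:\tau$, $\Gamma_2\vdash r:\tau$ infer $\Gamma_1,\Gamma_2\vdash t\langle s,r\rangle:\tau$; ($\otimes^-$) from $\Gamma_1\vdash t:\tau\otimes\rho$ and $\Gamma_2,x^\tau,y^\rho\vdash s:\sigma$ infer $\Gamma_1,\Gamma_2\vdash t(\lambda x^\tau.\lambda y^\rho.s):\sigma$; ($\mathbf{L}^-$) from $\Gamma\vdash t:\mathbf{L}(\tau)$ and $\emptyset\vdash s:\Diamond\multimap\tau\multimap\rho\multimap\rho$ infer $\Gamma\vdash t\{s\}:\rho\multimap\rho$. *)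

theory Defs
  imports Main
begin

datatype ty = Dia | Bool | Lolli ty ty | Tensor ty ty | Times ty ty | Lst ty

datatype var = Var nat ty

fun vty :: "var \<Rightarrow> ty" where "vty (Var n T) = T"

datatype const = TT | FF | NilC ty | ConsC ty | TensC ty ty

fun cty :: "const \<Rightarrow> ty" where
  "cty TT = Bool"
| "cty FF = Bool"
| "cty (NilC T) = Lst T"
| "cty (ConsC T) = Lolli Dia (Lolli T (Lolli (Lst T) (Lst T)))"
| "cty (TensC T R) = Lolli T (Lolli R (Tensor T R))"

text \<open>Terms up to renaming of bound variables, in locally nameless representation:
  free variables are named, bound variables are de Bruijn indices.
  \<open>Lam T b\<close> is \<open>\<lambda>x\<^sup>T. b\<close>, \<open>Pair\<close> is \<open>\<langle>t,s\<rangle>\<close>, \<open>App\<close> is application, \<open>Brace t\<close> is \<open>{t}\<close>.\<close>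
datatype tm = FVar var | BVar nat | Cst const | Lam ty tm | Pair tm tm | App tm tm | Brace tm

fun fv :: "tm \<Rightarrow> var set" where
  "fv (FVar x) = {x}"
| "fv (BVar i) = {}"
| "fv (Cst c) = {}"
| "fv (Lam T t) = fv t"
| "fv (Pair t s) = fv t \<union> fv s"
| "fv (App t s) = fv t \<union> fv s"
| "fv (Brace t) = fv t"

fun opn :: "nat \<Rightarrow> tm \<Rightarrow> tm \<Rightarrow> tm" where
  "opn k u (FVar x) = FVar x"
| "opn k u (BVar i) = (if i = k then u else BVar i)"
| "opn k u (Cst c) = Cst c"
| "opn k u (Lam T t) = Lam T (opn (Suc k) u t)"
| "opn k u (Pair t s) = Pair (opn k u t) (opn k u s)"
| "opn k u (App t s) = App (opn k u t) (opn k u s)"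
| "opn k u (Brace t) = Brace (opn k u t)"

text \<open>A binder \<open>\<lambda>x\<^sup>\<tau>. t\<close> is represented by any
  name x not free in the body (alpha-equivalence).\<close>
inductive typing :: "var set \<Rightarrow> tm \<Rightarrow> ty \<Rightarrow> bool" where
  tVar: "finite \<Gamma> \<Longrightarrow> x \<in> \<Gamma> \<Longrightarrow> typing \<Gamma> (FVar x) (vty x)"
| tConst: "finite \<Gamma> \<Longrightarrow> typing \<Gamma> (Cst c) (cty c)"
| tLolliI: "x \<notin> fv b \<Longrightarrow> vty x = T \<Longrightarrow> typing (\<Gamma> \<union> {x}) (opn 0 (FVar x) b) R
            \<Longrightarrow> typing \<Gamma> (Lam T b) (Lolli T R)"
| tLolliE: "typing \<Gamma>1 t (Lolli T R) \<Longrightarrow> typing \<Gamma>2 s T \<Longrightarrow> \<Gamma>1 \<inter> \<Gamma>2 = {}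
            \<Longrightarrow> typing (\<Gamma>1 \<union> \<Gamma>2) (App t s) R"
| tTimesI: "typing \<Gamma> t T \<Longrightarrow> typing \<Gamma> s R \<Longrightarrow> typing \<Gamma> (Pair t s) (Times T R)"
| tTimesE1: "typing \<Gamma> t (Times T R) \<Longrightarrow> typing \<Gamma> (App t (Cst TT)) T"
| tTimesE0: "typing \<Gamma> t (Times T R) \<Longrightarrow> typing \<Gamma> (App t (Cst FF)) R"
| tBoolE: "typing \<Gamma>1 t Bool \<Longrightarrow> typing \<Gamma>2 s T \<Longrightarrow> typing \<Gamma>2 r T \<Longrightarrow> \<Gamma>1 \<inter> \<Gamma>2 = {}
            \<Longrightarrow> typing (\<Gamma>1 \<union> \<Gamma>2) (App t (Pair s r)) T"
| tTensorE: "typing \<Gamma>1 t (Tensor T R) \<Longrightarrow> vty x = T \<Longrightarrow> vty y = R \<Longrightarrow> x \<noteq> y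
            \<Longrightarrow> x \<notin> fv s \<Longrightarrow> y \<notin> fv s \<Longrightarrow> x \<notin> \<Gamma>2 \<Longrightarrow> y \<notin> \<Gamma>2
            \<Longrightarrow> typing (\<Gamma>2 \<union> {x, y}) (opn 0 (FVar y) (opn 1 (FVar x) s)) S
            \<Longrightarrow> \<Gamma>1 \<inter> \<Gamma>2 = {}
            \<Longrightarrow> typing (\<Gamma>1 \<union> \<Gamma>2) (App t (Lam T (Lam R s))) S"
| tLstE: "typing \<Gamma> t (Lst T) \<Longrightarrow> typing {} s (Lolli Dia (Lolli T (Lolli R R)))
            \<Longrightarrow> typing \<Gamma> (App t (Brace s)) (Lolli R R)"

end

theory Submission
  imports Defs
begin

fun sim :: "tm \<Rightarrow> tm \<Rightarrow> bool" where
  "sim (FVar x) (FVar y) = (vty x = vty y)"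
| "sim (BVar i) (BVar j) = (i = j)"
| "sim (Cst c) (Cst d) = (c = d)"
| "sim (Lam T a) (Lam T' b) = (T = T' \<and> sim a b)"
| "sim (Pair a b) (Pair c d) = (sim a c \<and> sim b d)"
| "sim (App a b) (App c d) = (sim a c \<and> sim b d)"
| "sim (Brace a) (Brace b) = sim a b"
| "sim _ _ = False"

lemma sim_FVar: "sim (FVar x) t2 = (\<exists>y. t2 = FVar y \<and> vty x = vty y)"
  by (cases t2) auto
lemma sim_Cst: "sim (Cst c) t2 = (t2 = Cst c)"
  by (cases t2) auto
lemma sim_Lam: "sim (Lam T a) t2 = (\<exists>b. t2 = Lam T b \<and> sim a b)"
  by (cases t2) auto
lemma sim_Pair: "sim (Pair a b) t2 = (\<exists>c d. t2 = Pair c d \<and> sim a c \<and> sim b d)"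
  by (cases t2) auto
lemma sim_App: "sim (App a b) t2 = (\<exists>c d. t2 = App c d \<and> sim a c \<and> sim b d)"
  by (cases t2) auto
lemma sim_Brace: "sim (Brace a) t2 = (\<exists>b. t2 = Brace b \<and> sim a b)"
  by (cases t2) auto

lemma sim_refl: "sim t t"
  by (induction t) auto

lemma sim_opn: "sim a b \<Longrightarrow> vty x = vty y \<Longrightarrow> sim (opn k (FVar x) a) (opn k (FVar y) b)"
proof (induction a arbitrary: b k)
  case (FVar z) then show ?case by (auto simp: sim_FVar)
next
  case (BVar i) then show ?case by (cases b) auto
next
  case (Cst c) then show ?case by (auto simp: sim_Cst)
next
  case (Lam T a) then show ?case by (auto simp: sim_Lam)
next
  case (Pair a1 a2) then show ?case by (auto simp: sim_Pair)
next
  case (App a1 a2) then show ?case by (auto simp: sim_App)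
next
  case (Brace a) then show ?case by (auto simp: sim_Brace)
qed

inductive_cases LamE: "typing G (Lam T b) U"
inductive_cases AppE: "typing G (App t s) U"
inductive_cases FVarE: "typing G (FVar x) U"
inductive_cases CstE: "typing G (Cst c) U"
inductive_cases PairE: "typing G (Pair a b) U"

lemma uniq: "typing G1 t1 T1 \<Longrightarrow> sim t1 t2 \<Longrightarrow> typing G2 t2 T2 \<Longrightarrow> T1 = T2"
proof (induction arbitrary: G2 t2 T2 rule: typing.induct)
  case (tVar \<Gamma> x)
  then show ?case by (auto simp: sim_FVar elim: FVarE)
next
  case (tConst \<Gamma> c)
  then show ?case by (auto simp: sim_Cst elim: CstE)
next
  case (tLolliI x b T \<Gamma> R)
  from tLolliI.prems(1) obtain b' where t2: "t2 = Lam T b'" "sim b b'" by (auto simp: sim_Lam)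
  from tLolliI.prems(2)[unfolded t2] show ?case
  proof (rule LamE)
    fix y R' assume h: "T2 = Lolli T R'" "vty y = T" "typing (insert y G2) (opn 0 (FVar y) b') R'"
    have "sim (opn 0 (FVar x) b) (opn 0 (FVar y) b')"
      using sim_opn t2 h tLolliI.hyps by auto
    then show ?thesis using h tLolliI.IH by blast
  qed
next
  case (tLolliE \<Gamma>1 t T R \<Gamma>2 s)
  from tLolliE.prems(1) obtain t' s' where t2: "t2 = App t' s'" "sim t t'" "sim s s'" by (auto simp: sim_App)
  have ht: "\<And>G U. typing G t' U \<Longrightarrow> U = Lolli T R" using tLolliE.IH(1) t2 by metis
  have hs: "\<And>G U. typing G s' U \<Longrightarrow> U = T" using tLolliE.IH(2) t2 by metis
  from tLolliE.prems(2)[unfolded t2] show ?case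
    by (rule AppE) (auto dest: ht hs)
next
  case (tTimesI \<Gamma> t T s R)
  then show ?case by (auto simp: sim_Pair elim!: PairE)
next
  case (tTimesE1 \<Gamma> t T R)
  from tTimesE1.prems(1) obtain t' where t2: "t2 = App t' (Cst TT)" "sim t t'" by (auto simp: sim_App sim_Cst)
  have ht: "\<And>G U. typing G t' U \<Longrightarrow> U = Times T R" using tTimesE1.IH(1) t2 by metis
  from tTimesE1.prems(2)[unfolded t2] show ?case
    by (rule AppE) (auto dest: ht)
next
  case (tTimesE0 \<Gamma> t T R)
  from tTimesE0.prems(1) obtain t' where t2: "t2 = App t' (Cst FF)" "sim t t'" by (auto simp: sim_App sim_Cst)
  have ht: "\<And>G U. typing G t' U \<Longrightarrow> U = Times T R" using tTimesE0.IH(1) t2 by metis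
  from tTimesE0.prems(2)[unfolded t2] show ?case
    by (rule AppE) (auto dest: ht)
next
  case (tBoolE \<Gamma>1 t \<Gamma>2 s T r)
  from tBoolE.prems(1) obtain t' s' r' where t2: "t2 = App t' (Pair s' r')" "sim t t'" "sim s s'" "sim r r'"
    by (auto simp: sim_App sim_Pair)
  have ht: "\<And>G U. typing G t' U \<Longrightarrow> U = Bool" using tBoolE.IH(1) t2 by metis
  have hs: "\<And>G U. typing G s' U \<Longrightarrow> U = T" using tBoolE.IH(2) t2 by metis
  from tBoolE.prems(2)[unfolded t2] show ?case
    by (rule AppE) (auto dest: ht hs)
next
  case (tTensorE \<Gamma>1 t T R x y s \<Gamma>2 S)
  from tTensorE.prems(1) obtain t' s' where t2: "t2 = App t' (Lam T (Lam R s'))" "sim t t'" "sim s s'"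
    by (auto simp: sim_App sim_Lam)
  have ht: "\<And>G U. typing G t' U \<Longrightarrow> U = Tensor T R" using tTensorE.IH(1) t2 by metis
  from tTensorE.prems(2)[unfolded t2] show ?case
  proof (rule AppE)
    fix G1 x' y' s'' G2'
    assume h: "Lam T (Lam R s') = Lam (vty x') (Lam (vty y') s'')"
      "typing (insert x' (insert y' G2')) (opn 0 (FVar y') (opn (Suc 0) (FVar x') s'')) T2"
    have "sim (opn 0 (FVar y) (opn 1 (FVar x) s)) (opn 0 (FVar y') (opn 1 (FVar x') s''))"
      using sim_opn t2 h tTensorE.hyps by auto
    then show ?thesis using h tTensorE.IH(2) by (metis One_nat_def insert_commute Un_insert_right sup_bot.right_neutral)
  qed (auto dest: ht)
next
  case (tLstE \<Gamma> t T s R)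
  from tLstE.prems(1) obtain t' s' where t2: "t2 = App t' (Brace s')" "sim t t'" "sim s s'"
    by (auto simp: sim_App sim_Brace)
  have ht: "\<And>G U. typing G t' U \<Longrightarrow> U = Lst T" using tLstE.IH(1) t2 by metis
  have hs: "\<And>G U. typing G s' U \<Longrightarrow> U = Lolli Dia (Lolli T (Lolli R R))" using tLstE.IH(2) t2 by metis
  from tLstE.prems(2)[unfolded t2] show ?case
    by (rule AppE) (auto dest: ht hs)
qed

lemma fv_opn_sub: "fv t \<subseteq> fv (opn k u t)"
  by (induction t arbitrary: k) auto

lemma fv_opn_var: "fv (opn k (FVar x) t) \<subseteq> fv t \<union> {x}"
  by (induction t arbitrary: k) auto

lemma typing_fin_fv: "typing G t T \<Longrightarrow> finite G \<and> fv t \<subseteq> G"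
proof (induction rule: typing.induct)
  case (tLolliI x b T \<Gamma> R)
  then show ?case using fv_opn_sub[of b 0 "FVar x"] by auto
next
  case (tTensorE \<Gamma>1 t T R x y s \<Gamma>2 S)
  then show ?case using fv_opn_sub[of s 1 "FVar x"] fv_opn_sub[of "opn 1 (FVar x) s" 0 "FVar y"] by auto
qed auto

lemma strengthen: "typing G t T \<Longrightarrow> fv t \<subseteq> G' \<Longrightarrow> G' \<subseteq> G \<Longrightarrow> typing G' t T"
proof (induction arbitrary: G' rule: typing.induct)
  case (tVar \<Gamma> x)
  then show ?case using finite_subset[of G' \<Gamma>] typing.tVar[of G' x] by simp
next
  case (tConst \<Gamma> c)
  then show ?case using finite_subset[of G' \<Gamma>] typing.tConst[of G' c] by simp
next
  case (tLolliI x b T \<Gamma> R)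
  have "typing (G' \<union> {x}) (opn 0 (FVar x) b) R"
    apply (rule tLolliI.IH) using fv_opn_var[of 0 x b] tLolliI.prems by auto
  then show ?case using tLolliI.hyps(1,2) by (rule typing.tLolliI[rotated 2])
next
  case (tLolliE \<Gamma>1 t T R \<Gamma>2 s)
  have f1: "fv t \<subseteq> \<Gamma>1" "fv s \<subseteq> \<Gamma>2" using tLolliE.hyps typing_fin_fv by auto
  have a: "typing (G' \<inter> \<Gamma>1) t (Lolli T R)" by (rule tLolliE.IH(1)) (use f1 tLolliE.prems in auto)
  have b: "typing (G' \<inter> \<Gamma>2) s T" by (rule tLolliE.IH(2)) (use f1 tLolliE.prems in auto)
  have "G' = (G' \<inter> \<Gamma>1) \<union> (G' \<inter> \<Gamma>2)" using tLolliE.prems by auto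
  moreover have "typing ((G' \<inter> \<Gamma>1) \<union> (G' \<inter> \<Gamma>2)) (App t s) R"
    by (rule typing.tLolliE[OF a b]) (use tLolliE.hyps in auto)
  ultimately show ?case by simp
next
  case (tTimesI \<Gamma> t T s R)
  show ?case by (rule typing.tTimesI; rule tTimesI.IH) (use tTimesI.prems in auto)
next
  case (tTimesE1 \<Gamma> t T R)
  show ?case by (rule typing.tTimesE1, rule tTimesE1.IH) (use tTimesE1.prems in auto)
next
  case (tTimesE0 \<Gamma> t T R)
  show ?case by (rule typing.tTimesE0, rule tTimesE0.IH) (use tTimesE0.prems in auto)
next
  case (tBoolE \<Gamma>1 t \<Gamma>2 s T r)
  have f1: "fv t \<subseteq> \<Gamma>1" "fv s \<subseteq> \<Gamma>2" "fv r \<subseteq> \<Gamma>2" using tBoolE.hyps typing_fin_fv by auto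
  have a: "typing (G' \<inter> \<Gamma>1) t Bool" by (rule tBoolE.IH(1)) (use f1 tBoolE.prems in auto)
  have b: "typing (G' \<inter> \<Gamma>2) s T" by (rule tBoolE.IH(2)) (use f1 tBoolE.prems in auto)
  have c: "typing (G' \<inter> \<Gamma>2) r T" by (rule tBoolE.IH(3)) (use f1 tBoolE.prems in auto)
  have "G' = (G' \<inter> \<Gamma>1) \<union> (G' \<inter> \<Gamma>2)" using tBoolE.prems by auto
  moreover have "typing ((G' \<inter> \<Gamma>1) \<union> (G' \<inter> \<Gamma>2)) (App t (Pair s r)) T"
    by (rule typing.tBoolE[OF a b c]) (use tBoolE.hyps in auto)
  ultimately show ?case by simp
next
  case (tTensorE \<Gamma>1 t T R x y s \<Gamma>2 S)
  have f1: "fv t \<subseteq> \<Gamma>1" using tTensorE.hyps typing_fin_fv by auto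
  have "fv (opn 0 (FVar y) (opn 1 (FVar x) s)) \<subseteq> \<Gamma>2 \<union> {x, y}"
    using tTensorE.hyps(9) typing_fin_fv by blast
  hence f2: "fv s \<subseteq> \<Gamma>2" using fv_opn_sub[of s 1 "FVar x"] fv_opn_sub[of "opn 1 (FVar x) s" 0 "FVar y"]
      tTensorE.hyps(5,6) by auto
  have a: "typing (G' \<inter> \<Gamma>1) t (Tensor T R)" by (rule tTensorE.IH(1)) (use f1 tTensorE.prems in auto)
  have b: "typing ((G' \<inter> \<Gamma>2) \<union> {x, y}) (opn 0 (FVar y) (opn 1 (FVar x) s)) S"
    apply (rule tTensorE.IH(2))
    using fv_opn_var[of 0 y "opn 1 (FVar x) s"] fv_opn_var[of 1 x s] f2 tTensorE.prems by auto
  have "G' = (G' \<inter> \<Gamma>1) \<union> (G' \<inter> \<Gamma>2)" using tTensorE.prems by auto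
  moreover have "typing ((G' \<inter> \<Gamma>1) \<union> (G' \<inter> \<Gamma>2)) (App t (Lam T (Lam R s))) S"
    by (rule typing.tTensorE[OF a _ _ _ _ _ _ _ b]) (use tTensorE.hyps in auto)
  ultimately show ?case by simp
next
  case (tLstE \<Gamma> t T s R)
  show ?case by (rule typing.tLstE[OF _ tLstE.hyps(2)], rule tLstE.IH(1)) (use tLstE.prems in auto)
qed

theorem lemma2p6:
  fixes t :: tm
  shows "(\<forall>\<Gamma>1 \<Gamma>2 T1 T2. typing \<Gamma>1 t T1 \<and> typing \<Gamma>2 t T2 \<longrightarrow> T1 = T2) \<and>
         (\<forall>T. (\<exists>\<Gamma>. typing \<Gamma> t T) \<longrightarrow>
              (\<exists>\<Gamma>0. typing \<Gamma>0 t T \<and> (\<forall>\<Gamma>. typing \<Gamma> t T \<longrightarrow> \<Gamma>0 \<subseteq> \<Gamma>) \<and> \<Gamma>0 = fv t))"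
proof (intro conjI allI impI)
  fix G1 G2 T1 T2 assume "typing G1 t T1 \<and> typing G2 t T2"
  then show "T1 = T2" using uniq[OF _ sim_refl] by blast
next
  fix T assume "\<exists>G. typing G t T"
  then obtain G where g: "typing G t T" by blast
  have "typing (fv t) t T" using strengthen[OF g] typing_fin_fv[OF g] by blast
  moreover have "\<forall>G'. typing G' t T \<longrightarrow> fv t \<subseteq> G'" using typing_fin_fv by blast
  ultimately show "\<exists>\<Gamma>0. typing \<Gamma>0 t T \<and> (\<forall>\<Gamma>. typing \<Gamma> t T \<longrightarrow> \<Gamma>0 \<subseteq> \<Gamma>) \<and> \<Gamma>0 = fv t" by blast
qed

end
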